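(* Let $G=(V,A)$ be a finite simple graph without loops and without isolated vertices and $\mathfrak n=\mathfrak n(G)$ its graph algebra, with center $\mathfrak z$. Then $(\Lambda^2\mathfrak n)^{\mathfrak n}=\Lambda^2\mathfrak z$ if and only if $|e|\ge 2$ for all $e\in V$.
   Context: Vertices $V=\{e_1,\dots,e_n\}$ are ordered; each edge joining $e_i,e_j$ ($i<j$) is oriented from $e_i$ to $e_j$. $\mathfrak n(G)$ (over a field of characteristic zero) has basis $V\cup A$, $[e_i,e_j]=\alpha$ if $\alpha$ goes from $e_i$ to $e_j$, $[e_i,e_j]=0$ if not adjacent, edges central; $\mathfrak z=\mathrm{span}(A)$. $|e|$ is the degree of $e$. $(\Lambda^2\mathfrak n)^{\mathfrak n}$ is the space of $\omega\in\Lambda^2\mathfrak n$ with $\mathrm{ad}_x\omega=0$ for all $x$, where $\mathrm{ad}_x(a\wedge b)=[x,a]\wedge b+a\wedge[x,b]$. *)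

theory Defs
  imports Main
begin

text \<open>Vertices carry a linear
order; an edge joining e_i and e_j with i < j is the pair (i, j) (oriented from e_i to e_j).\<close>

datatype 'v gbasis = Vert 'v | Edge 'v 'v

definition gbasis :: "'v set \<Rightarrow> ('v \<times> 'v) set \<Rightarrow> 'v gbasis set" where
  "gbasis V A = Vert ` V \<union> (\<lambda>(i, j). Edge i j) ` A"

definition galg :: "'v set \<Rightarrow> ('v \<times> 'v) set \<Rightarrow> ('v gbasis \<Rightarrow> 'k::field) set" where
  "galg V A = {x. \<forall>b. b \<notin> gbasis V A \<longrightarrow> x b = 0}"

text \<open>Lie bracket: [e_i, e_j] = alpha if alpha = (i,j) is an edge, bilinearly extended;
edges are central.\<close>
definition gbr :: "('v \<times> 'v) set \<Rightarrow> ('v gbasis \<Rightarrow> 'k::field) \<Rightarrow> ('v gbasis \<Rightarrow> 'k) \<Rightarrow> ('v gbasis \<Rightarrow> 'k)" where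
  "gbr A x y = (\<lambda>b. case b of
      Vert _ \<Rightarrow> 0
    | Edge i j \<Rightarrow> (if (i, j) \<in> A then x (Vert i) * y (Vert j) - x (Vert j) * y (Vert i) else 0))"

definition unitvec :: "'v gbasis \<Rightarrow> ('v gbasis \<Rightarrow> 'k::field)" where
  "unitvec b = (\<lambda>c. if c = b then 1 else 0)"

text \<open>Lambda^2 n: an element sum_{b<c} w b c (b wedge c) is encoded by its antisymmetric
coefficient function w, supported on basis x basis.\<close>
definition wedge2 :: "'v set \<Rightarrow> ('v \<times> 'v) set \<Rightarrow> ('v gbasis \<Rightarrow> 'v gbasis \<Rightarrow> 'k::field) set" where
  "wedge2 V A = {w. (\<forall>b c. w b c = - w c b) \<and>
      (\<forall>b c. b \<notin> gbasis V A \<or> c \<notin> gbasis V A \<longrightarrow> w b c = 0)}"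

text \<open>ad_x (a wedge b) = [x,a] wedge b + a wedge [x,b], in coefficient form.\<close>
definition ad2 :: "'v set \<Rightarrow> ('v \<times> 'v) set \<Rightarrow> ('v gbasis \<Rightarrow> 'k::field)
      \<Rightarrow> ('v gbasis \<Rightarrow> 'v gbasis \<Rightarrow> 'k) \<Rightarrow> ('v gbasis \<Rightarrow> 'v gbasis \<Rightarrow> 'k)" where
  "ad2 V A x w = (\<lambda>p q. \<Sum>b\<in>gbasis V A.
       w b q * gbr A x (unitvec b) p + w p b * gbr A x (unitvec b) q)"

definition invariants :: "'v set \<Rightarrow> ('v \<times> 'v) set \<Rightarrow> ('v gbasis \<Rightarrow> 'v gbasis \<Rightarrow> 'k::field) set" where
  "invariants V A = {w \<in> wedge2 V A. \<forall>x \<in> galg V A. ad2 V A x w = (\<lambda>p q. 0)}"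

definition center_basis :: "('v \<times> 'v) set \<Rightarrow> 'v gbasis set" where
  "center_basis A = (\<lambda>(i, j). Edge i j) ` A"

definition wedge2_center :: "'v set \<Rightarrow> ('v \<times> 'v) set \<Rightarrow> ('v gbasis \<Rightarrow> 'v gbasis \<Rightarrow> 'k::field) set" where
  "wedge2_center V A = {w \<in> wedge2 V A.
      \<forall>b c. b \<notin> center_basis A \<or> c \<notin> center_basis A \<longrightarrow> w b c = 0}"

definition vdegree :: "'v set \<Rightarrow> ('v \<times> 'v) set \<Rightarrow> 'v \<Rightarrow> nat" where
  "vdegree V A v = card {u \<in> V. (v, u) \<in> A \<or> (u, v) \<in> A}"

end

theory Submission
  imports Defs
begin

lemma gb_fin:
  assumes "finite V" "A \<subseteq> {(i, j). i \<in> V \<and> j \<in> V \<and> i < j}"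
  shows "finite (gbasis V A)"
proof -
  have "A \<subseteq> V \<times> V" using assms(2) by auto
  hence "finite A" using assms(1) finite_subset by blast
  thus ?thesis using assms(1) unfolding gbasis_def by auto
qed

lemma gbr_vert0: "gbr A x y (Vert c) = 0"
  unfolding gbr_def by simp

lemma gbr_unit_edge: "gbr A x (unitvec (Edge i j)) = (\<lambda>_. 0)"
  unfolding gbr_def unitvec_def by (auto split: gbasis.splits)

lemma sum_gbr:
  assumes fin: "finite (gbasis V A)" and ij: "(i,j) \<in> A \<Longrightarrow> Vert i \<in> gbasis V A \<and> Vert j \<in> gbasis V A"
  shows "(\<Sum>b\<in>gbasis V A. h b * gbr A (unitvec (Vert a)) (unitvec b) (Edge i j))
     = (if (i,j) \<in> A then (if a = i then h (Vert j) else 0) - (if a = j then h (Vert i) else 0) else 0)"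
proof (cases "(i,j) \<in> A")
  case True
  have "(\<Sum>b\<in>gbasis V A. h b * gbr A (unitvec (Vert a)) (unitvec b) (Edge i j))
     = (\<Sum>b\<in>gbasis V A. (if b = Vert j then (if a = i then h b else 0) else 0)
                        - (if b = Vert i then (if a = j then h b else 0) else 0))"
    by (rule sum.cong) (auto simp: gbr_def unitvec_def True)
  also have "\<dots> = (if a = i then h (Vert j) else 0) - (if a = j then h (Vert i) else 0)"
    using ij True fin by (simp add: sum_subtractf sum.delta)
  finally show ?thesis using True by simp
next
  case False
  thus ?thesis by (simp add: gbr_def)
qed

lemma sum_gbr_vert:
  "(\<Sum>b\<in>B. h b * gbr A x (unitvec b) (Vert c)) = 0"
  by (simp add: gbr_vert0)

lemma ad2_split:
  "ad2 V A x w p q = (\<Sum>b\<in>gbasis V A. w b q * gbr A x (unitvec b) p)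
                    + (\<Sum>b\<in>gbasis V A. w p b * gbr A x (unitvec b) q)"
  unfolding ad2_def by (simp add: sum.distrib)

lemma vert_in_gb: "a \<in> V \<Longrightarrow> Vert a \<in> gbasis V A"
  unfolding gbasis_def by auto

lemma unit_galg: "a \<in> V \<Longrightarrow> unitvec (Vert a) \<in> galg V A"
  unfolding galg_def unitvec_def using vert_in_gb by auto

lemma inv_ad0: "w \<in> invariants V A \<Longrightarrow> a \<in> V \<Longrightarrow> ad2 V A (unitvec (Vert a)) w p q = 0"
proof -
  assume w: "w \<in> invariants V A" and a: "a \<in> V"
  have "\<forall>x \<in> galg V A. ad2 V A x w = (\<lambda>p q. 0)" using w unfolding invariants_def by simp
  moreover have "unitvec (Vert a) \<in> galg V A" using a by (rule unit_galg)
  ultimately have "ad2 V A (unitvec (Vert a)) w = (\<lambda>p q. 0)" by (rule bspec)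
  thus ?thesis by simp
qed

lemma cond_VE:
  assumes fin: "finite V" and sub: "A \<subseteq> {(i, j). i \<in> V \<and> j \<in> V \<and> i < j}"
    and w: "w \<in> invariants V A" and a: "a \<in> V" and ij: "(i,j) \<in> A"
  shows "(if a = i then w (Vert c) (Vert j) else 0) - (if a = j then w (Vert c) (Vert i) else 0) = 0"
proof -
  have gf: "finite (gbasis V A)" using gb_fin fin sub by blast
  have ijV: "Vert i \<in> gbasis V A \<and> Vert j \<in> gbasis V A" using ij sub by (auto intro: vert_in_gb)
  have "ad2 V A (unitvec (Vert a)) w (Vert c) (Edge i j) = 0" by (rule inv_ad0[OF w a])
  thus ?thesis unfolding ad2_split using sum_gbr[OF gf, of i j "\<lambda>b. w (Vert c) b" a] ijV ij
    by (simp add: gbr_vert0)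
qed

lemma cond_EE:
  assumes fin: "finite V" and sub: "A \<subseteq> {(i, j). i \<in> V \<and> j \<in> V \<and> i < j}"
    and w: "w \<in> invariants V A" and a: "a \<in> V" and ij: "(i,j) \<in> A" and kl: "(k,l) \<in> A"
  shows "(if a = i then w (Vert j) (Edge k l) else 0) - (if a = j then w (Vert i) (Edge k l) else 0)
     + ((if a = k then w (Edge i j) (Vert l) else 0) - (if a = l then w (Edge i j) (Vert k) else 0)) = 0"
proof -
  have gf: "finite (gbasis V A)" using gb_fin fin sub by blast
  have ijV: "Vert i \<in> gbasis V A \<and> Vert j \<in> gbasis V A" using ij sub by (auto intro: vert_in_gb)
  have klV: "Vert k \<in> gbasis V A \<and> Vert l \<in> gbasis V A" using kl sub by (auto intro: vert_in_gb)
  have "ad2 V A (unitvec (Vert a)) w (Edge i j) (Edge k l) = 0" by (rule inv_ad0[OF w a])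
  moreover have "(\<Sum>b\<in>gbasis V A. w b (Edge k l) * gbr A (unitvec (Vert a)) (unitvec b) (Edge i j))
     = (if a = i then w (Vert j) (Edge k l) else 0) - (if a = j then w (Vert i) (Edge k l) else 0)"
    using sum_gbr[OF gf, of i j "\<lambda>b. w b (Edge k l)" a] ijV ij by simp
  moreover have "(\<Sum>b\<in>gbasis V A. w (Edge i j) b * gbr A (unitvec (Vert a)) (unitvec b) (Edge k l))
     = (if a = k then w (Edge i j) (Vert l) else 0) - (if a = l then w (Edge i j) (Vert k) else 0)"
    using sum_gbr[OF gf, of k l "\<lambda>b. w (Edge i j) b" a] klV kl by simp
  ultimately show ?thesis unfolding ad2_split by simp
qed


lemma antisym_w: "w \<in> invariants V A \<Longrightarrow> w b c = - w c b"
  unfolding invariants_def wedge2_def by blast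

lemma away:
  fixes A :: "('v::linorder \<times> 'v) set"
  assumes fin: "finite V" and sub: "A \<subseteq> {(i, j). i \<in> V \<and> j \<in> V \<and> i < j}"
    and w: "w \<in> invariants V A" and nb: "(a,v) \<in> A \<or> (v,a) \<in> A"
    and kl: "(k,l) \<in> A" and ak: "a \<noteq> k" and al: "a \<noteq> l"
  shows "w (Vert v) (Edge k l) = 0"
  using nb
proof
  assume h: "(a,v) \<in> A"
  have "a \<in> V" "a < v" using sub h by auto
  hence "a \<in> V" "a \<noteq> v" by auto
  from cond_EE[OF fin sub w this(1) h kl] this(2) ak al show ?thesis by simp
next
  assume h: "(v,a) \<in> A"
  have "a \<in> V" "v < a" using sub h by auto
  hence "a \<in> V" "a \<noteq> v" by auto
  from cond_EE[OF fin sub w this(1) h kl] this(2) ak al show ?thesis by simp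
qed

lemma triangle:
  fixes A :: "('v::linorder \<times> 'v) set" and w :: "'v gbasis \<Rightarrow> 'v gbasis \<Rightarrow> 'k::field_char_0"
  assumes fin: "finite V" and sub: "A \<subseteq> {(i, j). i \<in> V \<and> j \<in> V \<and> i < j}"
    and w: "w \<in> invariants V A" and e12: "(t1,t2) \<in> A" and e13: "(t1,t3) \<in> A" and e23: "(t2,t3) \<in> A"
  shows "w (Vert t1) (Edge t2 t3) = 0 \<and> w (Vert t2) (Edge t1 t3) = 0 \<and> w (Vert t3) (Edge t1 t2) = 0"
proof -
  have lt: "t1 < t2" "t2 < t3" "t1 \<in> V" "t2 \<in> V" "t3 \<in> V" using sub e12 e23 by auto
  have d: "t1 \<noteq> t2" "t2 \<noteq> t3" "t1 \<noteq> t3" "t2 \<noteq> t1" "t3 \<noteq> t2" "t3 \<noteq> t1" using lt(1,2) by auto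
  have as: "\<And>b c. w b c = - w c b" using antisym_w[OF w] by blast
  have 1: "w (Vert t2) (Edge t1 t3) - w (Vert t3) (Edge t1 t2) = 0"
    using cond_EE[OF fin sub w lt(3) e12 e13] d as[of "Edge t1 t2" "Vert t3"] by simp
  have 2: "w (Vert t1) (Edge t2 t3) + w (Vert t3) (Edge t1 t2) = 0"
    using cond_EE[OF fin sub w lt(4) e12 e23] d as[of "Edge t1 t2" "Vert t3"] by (simp add: algebra_simps) (metis add.inverse_inverse add.right_inverse)
  have 3: "w (Vert t2) (Edge t1 t3) - w (Vert t1) (Edge t2 t3) = 0"
    using cond_EE[OF fin sub w lt(5) e13 e23] d as[of "Edge t1 t3" "Vert t2"] by simp
  from 1 2 3 have "w (Vert t2) (Edge t1 t3) + w (Vert t2) (Edge t1 t3) = 0"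
    by (simp add: algebra_simps)
  hence "w (Vert t2) (Edge t1 t3) = 0" by simp
  with 1 2 3 show ?thesis by (simp add: algebra_simps)
qed


lemma gb_vert[simp]: "Vert u \<in> gbasis V A \<longleftrightarrow> u \<in> V"
  unfolding gbasis_def by auto
lemma gb_edge[simp]: "Edge k l \<in> gbasis V A \<longleftrightarrow> (k,l) \<in> A"
  unfolding gbasis_def by auto
lemma cb_edge[simp]: "Edge k l \<in> center_basis A \<longleftrightarrow> (k,l) \<in> A"
  unfolding center_basis_def by auto
lemma cb_vert[simp]: "Vert v \<notin> center_basis A"
  unfolding center_basis_def by auto

lemma zero_out: "w \<in> invariants V A \<Longrightarrow> b \<notin> gbasis V A \<or> c \<notin> gbasis V A \<Longrightarrow> w b c = 0"
  unfolding invariants_def wedge2_def by blast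

lemma inv_center:
  fixes A :: "('v::linorder \<times> 'v) set" and w :: "'v gbasis \<Rightarrow> 'v gbasis \<Rightarrow> 'k::field_char_0"
  assumes fin: "finite V" and sub: "A \<subseteq> {(i, j). i \<in> V \<and> j \<in> V \<and> i < j}"
    and noiso: "\<forall>v\<in>V. \<exists>u\<in>V. (v, u) \<in> A \<or> (u, v) \<in> A"
    and deg: "\<forall>v\<in>V. vdegree V A v \<ge> 2" and w: "w \<in> invariants V A"
  shows "w \<in> wedge2_center V A"
proof -
  have vv: "w (Vert c) (Vert u) = 0" for c u
  proof (cases "u \<in> V")
    case False thus ?thesis using zero_out[OF w] by simp
  next
    case True
    then obtain t where t: "t \<in> V" "(u, t) \<in> A \<or> (t, u) \<in> A" using noiso by blast
    from t(2) show ?thesis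
    proof
      assume h: "(u,t) \<in> A"
      have ne: "t \<noteq> u" using sub h by auto
      have e: "(if t = u then w (Vert c) (Vert t) else 0) - (if t = t then w (Vert c) (Vert u) else 0) = 0"
        by (rule cond_VE[OF fin sub w t(1) h])
      show ?thesis using e ne by (simp only: if_False if_True) simp
    next
      assume h: "(t,u) \<in> A"
      have ne: "u \<noteq> t" using sub h by auto
      have e: "(if t = t then w (Vert c) (Vert u) else 0) - (if t = u then w (Vert c) (Vert t) else 0) = 0"
        by (rule cond_VE[OF fin sub w t(1) h])
      show ?thesis using e ne by simp
    qed
  qed
  have ve: "w (Vert v) (Edge k l) = 0" if kl: "(k,l) \<in> A" and v: "v \<in> V" for v k l
  proof -
    define N where "N = {u \<in> V. (v, u) \<in> A \<or> (u, v) \<in> A}"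
    have cN: "card N \<ge> 2" using deg v unfolding N_def vdegree_def by blast
    have fN: "finite N" using fin unfolding N_def by simp
    show ?thesis
    proof (cases "\<exists>a\<in>N. a \<noteq> k \<and> a \<noteq> l")
      case True
      then obtain a where "a \<in> N" "a \<noteq> k" "a \<noteq> l" by blast
      thus ?thesis using away[OF fin sub w _ kl] unfolding N_def by blast
    next
      case False
      hence Nsub: "N \<subseteq> {k,l}" by blast
      have "card {k,l} \<le> 2" by (simp add: card_insert_le_m1)
      hence "card N = card {k,l}" using cN card_mono[OF _ Nsub] by simp
      hence Neq: "N = {k,l}" using card_subset_eq[OF _ Nsub] by simp
      have kN: "k \<in> N" and lN: "l \<in> N" using Neq by auto
      have klt: "k < l" using kl sub by auto
      have vk: "v \<noteq> k" using kN sub unfolding N_def by auto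
      have vl: "v \<noteq> l" using lN sub unfolding N_def by auto
      have ek: "(v,k) \<in> A \<or> (k,v) \<in> A" using kN unfolding N_def by simp
      have el: "(v,l) \<in> A \<or> (l,v) \<in> A" using lN unfolding N_def by simp
      have ord: "\<And>x y. (x,y) \<in> A \<Longrightarrow> x < y" using sub by auto
      show ?thesis
      proof (cases "v < k")
        case True
        hence "(v,k) \<in> A" "(v,l) \<in> A" using True ek el klt ord by (meson less_trans less_asym)+
        thus ?thesis using triangle[OF fin sub w _ _ kl] by blast
      next
        case False
        hence vk2: "k < v" using vk by auto
        show ?thesis
        proof (cases "v < l")
          case True
          hence "(k,v) \<in> A" "(v,l) \<in> A" using ek el vk2 by (auto dest: ord)
          thus ?thesis using triangle[OF fin sub w _ kl] by blast
        next
          case False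
          hence "l < v" using vl by auto
          hence "(k,v) \<in> A" "(l,v) \<in> A" using ek el vk2 by (auto dest: ord)
          thus ?thesis using triangle[OF fin sub w kl] by blast
        qed
      qed
    qed
  qed
  have gen: "w b c = 0" if b: "b \<notin> center_basis A" for b c
  proof (cases b)
    case (Vert v)
    show ?thesis
    proof (cases "v \<in> V")
      case False thus ?thesis using zero_out[OF w] Vert by simp
    next
      case True
      show ?thesis
      proof (cases c)
        case (Vert u) thus ?thesis using vv \<open>b = _\<close> by simp
      next
        case (Edge k l)
        show ?thesis
        proof (cases "(k,l) \<in> A")
          case True thus ?thesis using ve \<open>v \<in> V\<close> Edge \<open>b = Vert v\<close> by simp
        next
          case False thus ?thesis using zero_out[OF w] Edge by simp
        qed
      qed
    qed
  next
    case (Edge k l)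
    thus ?thesis using b zero_out[OF w] by simp
  qed
  have "w \<in> wedge2 V A" using w unfolding invariants_def by simp
  moreover have "\<forall>b c. b \<notin> center_basis A \<or> c \<notin> center_basis A \<longrightarrow> w b c = 0"
    using gen antisym_w[OF w] by (metis neg_equal_0_iff_equal)
  ultimately show ?thesis unfolding wedge2_center_def by simp
qed


lemma center_inv:
  assumes w: "w \<in> wedge2_center V A"
  shows "w \<in> invariants V A"
proof -
  have w2: "w \<in> wedge2 V A" and wz: "\<And>b c. b \<notin> center_basis A \<or> c \<notin> center_basis A \<Longrightarrow> w b c = 0"
    using w unfolding wedge2_center_def by auto
  have "ad2 V A x w = (\<lambda>p q. 0)" for x
  proof (intro ext)
    fix p q
    have "w b q * gbr A x (unitvec b) p + w p b * gbr A x (unitvec b) q = 0" for b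
    proof (cases "b \<in> center_basis A")
      case True
      then obtain k l where "b = Edge k l" unfolding center_basis_def by auto
      thus ?thesis by (simp add: gbr_unit_edge)
    next
      case False
      thus ?thesis using wz by simp
    qed
    thus "ad2 V A x w p q = 0" unfolding ad2_def by simp
  qed
  thus ?thesis using w2 unfolding invariants_def by simp
qed

lemma pendant_inv:
  fixes A :: "('v::linorder \<times> 'v) set" and W :: "'v gbasis \<Rightarrow> 'v gbasis \<Rightarrow> 'k::field"
  assumes fin: "finite V" and sub: "A \<subseteq> {(i, j). i \<in> V \<and> j \<in> V \<and> i < j}"
    and v: "v \<in> V" and e: "(e1,e2) \<in> A"
    and uniq: "\<And>i j. (i,j) \<in> A \<Longrightarrow> i = v \<or> j = v \<Longrightarrow> i = e1 \<and> j = e2"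
    and Wd: "W = (\<lambda>b c. if b = Vert v \<and> c = Edge e1 e2 then 1
                  else if b = Edge e1 e2 \<and> c = Vert v then -1 else 0)"
  shows "W \<in> invariants V A"
proof -
  have gf: "finite (gbasis V A)" using gb_fin fin sub by blast
  have w2: "W \<in> wedge2 V A" unfolding wedge2_def Wd using v e by auto
  have "ad2 V A x W = (\<lambda>p q. 0)" for x
  proof (intro ext)
    fix p q
    define G where "G = gbr A x (unitvec (Vert v))"
    have Gz: "G r = 0" if "r \<noteq> Edge e1 e2" for r
    proof (cases r)
      case (Vert u) thus ?thesis unfolding G_def by (simp add: gbr_vert0)
    next
      case (Edge i j)
      show ?thesis
      proof (cases "(i,j) \<in> A \<and> (i = v \<or> j = v)")
        case True thus ?thesis using uniq that Edge by blast
      next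
        case False thus ?thesis unfolding G_def Edge gbr_def unitvec_def by auto
      qed
    qed
    define T where "T = (if q = Edge e1 e2 then G p else 0) - (if p = Edge e1 e2 then G q else 0)"
    have T0: "T = 0" unfolding T_def using Gz by auto
    have "W b q * gbr A x (unitvec b) p + W p b * gbr A x (unitvec b) q = (if b = Vert v then T else 0)" for b
    proof (cases b)
      case (Vert u)
      thus ?thesis unfolding Wd T_def G_def by auto
    next
      case (Edge i j)
      thus ?thesis by (simp add: gbr_unit_edge)
    qed
    hence "ad2 V A x W p q = (\<Sum>b\<in>gbasis V A. if b = Vert v then T else 0)"
      unfolding ad2_def by simp
    also have "\<dots> = T" using gf v by (simp add: sum.delta)
    finally show "ad2 V A x W p q = 0" using T0 by simp
  qed
  thus ?thesis using w2 unfolding invariants_def by simp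
qed


theorem mainTheorem10:
  fixes V :: "'v::linorder set" and A :: "('v \<times> 'v) set"
  assumes "finite V"
    and "A \<subseteq> {(i, j). i \<in> V \<and> j \<in> V \<and> i < j}"
    and "\<forall>v\<in>V. \<exists>u\<in>V. (v, u) \<in> A \<or> (u, v) \<in> A"
  shows "(invariants V A :: ('v gbasis \<Rightarrow> 'v gbasis \<Rightarrow> 'k::field_char_0) set)
           = wedge2_center V A
         \<longleftrightarrow> (\<forall>v\<in>V. vdegree V A v \<ge> 2)"
proof
  assume deg: "\<forall>v\<in>V. vdegree V A v \<ge> 2"
  show "(invariants V A :: ('v gbasis \<Rightarrow> 'v gbasis \<Rightarrow> 'k::field_char_0) set) = wedge2_center V A"
    using inv_center[OF assms deg] center_inv by blast
next
  assume eq: "(invariants V A :: ('v gbasis \<Rightarrow> 'v gbasis \<Rightarrow> 'k::field_char_0) set) = wedge2_center V A"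
  show "\<forall>v\<in>V. vdegree V A v \<ge> 2"
  proof (rule ccontr)
    assume "\<not> (\<forall>v\<in>V. vdegree V A v \<ge> 2)"
    then obtain v where v: "v \<in> V" and d: "vdegree V A v < 2" by auto
    define N where "N = {u \<in> V. (v, u) \<in> A \<or> (u, v) \<in> A}"
    have fN: "finite N" using assms(1) unfolding N_def by simp
    have ne: "N \<noteq> {}" using assms(3) v unfolding N_def by blast
    have "card N < 2" using d unfolding N_def vdegree_def by simp
    moreover have "card N \<noteq> 0" using fN ne by simp
    ultimately have "card N = 1" by simp
    then obtain u where Nu: "N = {u}" using card_1_singletonE by blast
    have ord: "\<And>x y. (x,y) \<in> A \<Longrightarrow> x < y" using assms(2) by auto
    have nbr: "\<And>y. (v,y) \<in> A \<or> (y,v) \<in> A \<Longrightarrow> y = u"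
    proof -
      fix y assume "(v,y) \<in> A \<or> (y,v) \<in> A"
      moreover hence "y \<in> V" using assms(2) by auto
      ultimately have "y \<in> N" unfolding N_def by simp
      thus "y = u" using Nu by simp
    qed
    have uN: "(v,u) \<in> A \<or> (u,v) \<in> A" using Nu unfolding N_def by auto
    obtain e1 e2 where e: "(e1,e2) \<in> A" and
      uniq: "\<And>i j. (i,j) \<in> A \<Longrightarrow> i = v \<or> j = v \<Longrightarrow> i = e1 \<and> j = e2"
      and vin: "e1 = v \<or> e2 = v"
    proof (cases "(v,u) \<in> A")
      case True
      show ?thesis
      proof (rule that[OF True])
        fix i j assume ij: "(i,j) \<in> A" "i = v \<or> j = v"
        from ij(2) show "i = v \<and> j = u"
        proof
          assume "i = v" thus ?thesis using nbr ij(1) by blast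
        next
          assume jv: "j = v"
          hence "i = u" using nbr ij(1) by blast
          thus ?thesis using ij(1) jv True ord less_asym by blast
        qed
      qed simp
    next
      case False
      hence uv: "(u,v) \<in> A" using uN by simp
      show ?thesis
      proof (rule that[OF uv])
        fix i j assume ij: "(i,j) \<in> A" "i = v \<or> j = v"
        from ij(2) show "i = u \<and> j = v"
        proof
          assume iv: "i = v"
          hence "j = u" using nbr ij(1) by blast
          thus ?thesis using ij(1) iv False by blast
        next
          assume "j = v" thus ?thesis using nbr ij(1) by blast
        qed
      qed simp
    qed
    define W :: "'v gbasis \<Rightarrow> 'v gbasis \<Rightarrow> 'k" where "W = (\<lambda>b c. if b = Vert v \<and> c = Edge e1 e2 then 1
                  else if b = Edge e1 e2 \<and> c = Vert v then -1 else 0)"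
    have "W \<in> invariants V A" by (rule pendant_inv[OF assms(1,2) v e uniq W_def])
    hence "W \<in> wedge2_center V A" using eq by simp
    hence "W (Vert v) (Edge e1 e2) = 0" unfolding wedge2_center_def by simp
    thus False unfolding W_def by simp
  qed
qed

end
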